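(* Let $g_y(\omega)=\frac{\sigma_\epsilon^2}{2\pi}|\kappa(e^{i\omega})|^2$, $-\pi\le\omega\le\pi$, where $\sigma_\epsilon^2>0$ and $\kappa(z)=\sum_{s\ge0}\kappa_sz^s$ with $\kappa_0=1$, $\sum_s|\kappa_s|<\infty$ and $\kappa(z)\ne0$ for $|z|\le1$, so that $0<m\le g_y(\omega)\le M<\infty$ for all $\omega$, for some constants $m,M$. For $\beta\in[0,1]$ and $\theta\in\Theta=(-1,1)$ let $$f(\theta,\beta)=-\int_{-\pi}^{\pi}\frac{e^{i\omega}+\beta\theta}{|(1+\theta e^{i\omega})(1+\beta\theta e^{i\omega})|^2}\,g_y(\omega)\,d\omega,\qquad \bar L(\theta)=\int_{-\pi}^{\pi}\frac{g_y(\omega)}{|1+\theta e^{i\omega}|^2}\,d\omega .$$ Then for each $\beta\in[0,1]$, $f(\cdot,\beta)$ is infinitely differentiable on $\Theta$, and $\Theta_0^\beta=\{\theta\in\Theta: f(\theta,\beta)=0\}$ is a nonempty compact subset of $\Theta$. In the case $\beta=1$, $\Theta_0^1$ contains the (nonempty) set of minimizers of $\bar L$ over $\Theta$. *)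

theory Defs
  imports "HOL-Analysis.Analysis"
begin

definition kappa_fun :: "(nat \<Rightarrow> real) \<Rightarrow> complex \<Rightarrow> complex" where
  "kappa_fun \<kappa> z = (\<Sum>s. complex_of_real (\<kappa> s) * z ^ s)"

definition g_y :: "real \<Rightarrow> (nat \<Rightarrow> real) \<Rightarrow> real \<Rightarrow> real" where
  "g_y \<sigma>2 \<kappa> \<omega> = \<sigma>2 / (2 * pi) * (cmod (kappa_fun \<kappa> (exp (\<i> * complex_of_real \<omega>))))\<^sup>2"

definition f_fun :: "real \<Rightarrow> (nat \<Rightarrow> real) \<Rightarrow> real \<Rightarrow> real \<Rightarrow> complex" where
  "f_fun \<sigma>2 \<kappa> \<theta> \<beta> = - integral {-pi..pi} (\<lambda>\<omega>.
      (exp (\<i> * complex_of_real \<omega>) + complex_of_real (\<beta> * \<theta>)) /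
      complex_of_real ((cmod ((1 + complex_of_real \<theta> * exp (\<i> * complex_of_real \<omega>)) *
                              (1 + complex_of_real (\<beta> * \<theta>) * exp (\<i> * complex_of_real \<omega>))))\<^sup>2)
      * complex_of_real (g_y \<sigma>2 \<kappa> \<omega>))"

definition Lbar :: "real \<Rightarrow> (nat \<Rightarrow> real) \<Rightarrow> real \<Rightarrow> real" where
  "Lbar \<sigma>2 \<kappa> \<theta> = integral {-pi..pi} (\<lambda>\<omega>.
      g_y \<sigma>2 \<kappa> \<omega> / (cmod (1 + complex_of_real \<theta> * exp (\<i> * complex_of_real \<omega>)))\<^sup>2)"

definition C_infinity_on :: "real set \<Rightarrow> (real \<Rightarrow> 'a::real_normed_vector) \<Rightarrow> bool" where
  "C_infinity_on S F \<longleftrightarrow> (\<exists>D :: nat \<Rightarrow> real \<Rightarrow> 'a. (\<forall>x\<in>S. D 0 x = F x) \<and>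
      (\<forall>n. \<forall>x\<in>S. (D n has_vector_derivative D (Suc n) x) (at x)))"

end

theory Submission imports Defs "HOL-Complex_Analysis.Complex_Analysis" begin

lemma cos_lower: "1 - x\<^sup>2 / 2 \<le> cos (x::real)"
proof -
  have "cos x = 1 - 2 * (sin (x/2))\<^sup>2"
    using cos_double_sin[of "x/2"] by simp
  moreover have "(sin (x/2))\<^sup>2 \<le> (x/2)\<^sup>2"
    using abs_sin_x_le_abs_x[of "x/2"] by (metis abs_le_square_iff)
  ultimately show ?thesis by (simp add: power_divide)
qed

locale kset =
  fixes \<sigma>2 :: real and \<kappa> :: "nat \<Rightarrow> real"
  assumes s2: "\<sigma>2 > 0"
    and k0: "\<kappa> 0 = 1"
    and ksum: "summable (\<lambda>s. \<bar>\<kappa> s\<bar>)"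
    and knz: "\<And>z. cmod z \<le> 1 \<Longrightarrow> kappa_fun \<kappa> z \<noteq> 0"
begin

definition G where "G \<omega> = g_y \<sigma>2 \<kappa> \<omega>"

lemma kappa_cont: "continuous_on (cball 0 1) (kappa_fun \<kappa>)"
proof -
  have ul: "uniform_limit (cball 0 1) (\<lambda>n z. \<Sum>i<n. complex_of_real (\<kappa> i) * z ^ i)
       (\<lambda>z. \<Sum>i. complex_of_real (\<kappa> i) * z ^ i) sequentially"
  proof (rule Weierstrass_m_test[OF _ ksum])
    fix n and z :: complex assume "z \<in> cball 0 1"
    then have "cmod z \<le> 1" by simp
    then have "cmod z ^ n \<le> 1" by (simp add: power_le_one)
    then show "norm (complex_of_real (\<kappa> n) * z ^ n) \<le> \<bar>\<kappa> n\<bar>"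
      by (simp add: norm_mult norm_power mult_left_le)
  qed
  show ?thesis unfolding kappa_fun_def
    apply (rule uniform_limit_theorem[OF _ ul])
     apply (rule always_eventually)
    by (intro allI continuous_intros) simp
qed

lemma kappa_sums:
  assumes "cmod z \<le> 1"
  shows "(\<lambda>s. complex_of_real (\<kappa> s) * z ^ s) sums kappa_fun \<kappa> z"
proof -
  have "\<And>n. norm (complex_of_real (\<kappa> n) * z ^ n) \<le> \<bar>\<kappa> n\<bar>"
  proof -
    fix n
    have "cmod z ^ n \<le> 1" using assms by (simp add: power_le_one)
    then show "norm (complex_of_real (\<kappa> n) * z ^ n) \<le> \<bar>\<kappa> n\<bar>"
      by (simp add: norm_mult norm_power mult_left_le)
  qed
  then have "summable (\<lambda>s. complex_of_real (\<kappa> s) * z ^ s)"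
    by (rule summable_comparison_test'[OF ksum, rotated]) 
  then show ?thesis unfolding kappa_fun_def by (rule summable_sums)
qed

lemma kappa_cnj:
  assumes "cmod z \<le> 1"
  shows "kappa_fun \<kappa> (cnj z) = cnj (kappa_fun \<kappa> z)"
proof -
  have "(\<lambda>s. cnj (complex_of_real (\<kappa> s) * z ^ s)) sums cnj (kappa_fun \<kappa> z)"
    by (rule sums_cnj[THEN iffD2, OF kappa_sums[OF assms]])
  moreover have "(\<lambda>s. cnj (complex_of_real (\<kappa> s) * z ^ s)) = (\<lambda>s. complex_of_real (\<kappa> s) * (cnj z) ^ s)"
    by (simp only: complex_cnj_mult complex_cnj_complex_of_real complex_cnj_power)
  ultimately have "(\<lambda>s. complex_of_real (\<kappa> s) * (cnj z) ^ s) sums cnj (kappa_fun \<kappa> z)"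
    by (simp only:)
  then show ?thesis unfolding kappa_fun_def by (rule sums_unique[symmetric])
qed

lemma G_cont: "continuous_on UNIV G"
proof -
  have e: "continuous_on UNIV (\<lambda>\<omega>::real. exp (\<i> * complex_of_real \<omega>))"
    by (intro continuous_intros)
  have "continuous_on UNIV (\<lambda>\<omega>. kappa_fun \<kappa> (exp (\<i> * complex_of_real \<omega>)))"
    by (rule continuous_on_compose2[OF kappa_cont e]) (auto simp: norm_exp_i_times)
  then have "continuous_on UNIV (\<lambda>\<omega>. \<sigma>2 / (2 * pi) * (cmod (kappa_fun \<kappa> (exp (\<i> * complex_of_real \<omega>))))\<^sup>2)"
    by (intro continuous_intros)
  then show ?thesis unfolding G_def[abs_def] g_y_def .
qed

lemma G_pos: "G \<omega> > 0"
proof -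
  have "kappa_fun \<kappa> (exp (\<i> * complex_of_real \<omega>)) \<noteq> 0"
    by (rule knz) (simp add: norm_exp_i_times)
  then show ?thesis unfolding G_def g_y_def using s2 by simp
qed

lemma G_even: "G (-\<omega>) = G \<omega>"
proof -
  have "exp (\<i> * complex_of_real (-\<omega>)) = cnj (exp (\<i> * complex_of_real \<omega>))"
    by (simp add: exp_cnj)
  then show ?thesis unfolding G_def g_y_def
    by (simp only: kappa_cnj norm_exp_i_times complex_mod_cnj order_refl)
qed

lemma G_bounds: "\<exists>m M. 0 < m \<and> (\<forall>\<omega>\<in>{-pi..pi}. m \<le> G \<omega> \<and> G \<omega> \<le> M)"
proof -
  have c: "continuous_on {-pi..pi} G" using G_cont continuous_on_subset by blast
  obtain x where x: "x \<in> {-pi..pi}" "\<forall>y\<in>{-pi..pi}. G x \<le> G y"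
    using continuous_attains_inf[OF compact_Icc _ c] by auto
  obtain X where X: "X \<in> {-pi..pi}" "\<forall>y\<in>{-pi..pi}. G y \<le> G X"
    using continuous_attains_sup[OF compact_Icc _ c] by auto
  show ?thesis using x X G_pos[of x] by blast
qed

end

definition Ak :: "real \<Rightarrow> real \<Rightarrow> real" where
  "Ak t \<omega> = 1 + 2 * t * cos \<omega> + t\<^sup>2"

lemma Ak_norm: "(cmod (1 + complex_of_real t * exp (\<i> * complex_of_real \<omega>)))\<^sup>2 = Ak t \<omega>"
proof -
  have "exp (\<i> * complex_of_real \<omega>) = cis \<omega>" by (simp add: cis_conv_exp)
  then have "(cmod (1 + complex_of_real t * exp (\<i> * complex_of_real \<omega>)))\<^sup>2 = (1 + t * cos \<omega>)\<^sup>2 + (t * sin \<omega>)\<^sup>2"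
    by (simp add: cmod_power2)
  also have "\<dots> = Ak t \<omega>" unfolding Ak_def
    by (simp add: power2_eq_square algebra_simps) (metis sin_cos_squared_add2 power2_eq_square mult.assoc distrib_left mult.right_neutral) 
  finally show ?thesis .
qed

lemma Ak_ge: "\<bar>t\<bar> \<le> 1 \<Longrightarrow> (1 - \<bar>t\<bar>)\<^sup>2 \<le> Ak t \<omega>"
proof -
  assume "\<bar>t\<bar> \<le> 1"
  have "- \<bar>t\<bar> \<le> t * cos \<omega>"
    using abs_cos_le_one[of \<omega>] by (metis abs_le_iff abs_mult minus_le_iff mult.commute mult_left_le abs_ge_zero)
  then show ?thesis unfolding Ak_def by (simp add: power2_eq_square algebra_simps)
qed

lemma Ak_pos: "\<bar>t\<bar> < 1 \<Longrightarrow> 0 < Ak t \<omega>"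
proof -
  assume a: "\<bar>t\<bar> < 1"
  have "0 < (1 - \<bar>t\<bar>)\<^sup>2" using a by simp
  then show ?thesis using Ak_ge[of t \<omega>] a by linarith
qed

lemma Ak_cont: "continuous_on S (\<lambda>\<omega>. Ak t \<omega>)"
  unfolding Ak_def by (intro continuous_intros)

lemma abs_prod_lt: "\<bar>\<theta>\<bar> < 1 \<Longrightarrow> \<bar>\<beta>\<bar> \<le> 1 \<Longrightarrow> \<bar>\<beta> * (\<theta>::real)\<bar> < 1"
proof -
  assume a: "\<bar>\<theta>\<bar> < 1" "\<bar>\<beta>\<bar> \<le> 1"
  have "\<bar>\<beta>\<bar> * \<bar>\<theta>\<bar> \<le> 1 * \<bar>\<theta>\<bar>" using a by (intro mult_right_mono) auto
  then show ?thesis using a by (simp add: abs_mult)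
qed

context kset begin

definition Fi where "Fi \<theta> \<beta> \<omega> = (exp (\<i> * complex_of_real \<omega>) + complex_of_real (\<beta> * \<theta>)) /
      complex_of_real ((cmod ((1 + complex_of_real \<theta> * exp (\<i> * complex_of_real \<omega>)) *
                              (1 + complex_of_real (\<beta> * \<theta>) * exp (\<i> * complex_of_real \<omega>))))\<^sup>2)
      * complex_of_real (g_y \<sigma>2 \<kappa> \<omega>)"

definition Rk where "Rk \<beta> \<theta> \<omega> = (cos \<omega> + \<beta> * \<theta>) * G \<omega> / (Ak \<theta> \<omega> * Ak (\<beta> * \<theta>) \<omega>)"
definition Sk where "Sk \<beta> \<theta> \<omega> = sin \<omega> * G \<omega> / (Ak \<theta> \<omega> * Ak (\<beta> * \<theta>) \<omega>)"

lemma f_fun_Fi: "f_fun \<sigma>2 \<kappa> \<theta> \<beta> = - integral {-pi..pi} (Fi \<theta> \<beta>)"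
  unfolding f_fun_def Fi_def[abs_def] ..

lemma Fi_split: "Fi \<theta> \<beta> \<omega> = complex_of_real (Rk \<beta> \<theta> \<omega>) + \<i> * complex_of_real (Sk \<beta> \<theta> \<omega>)"
proof -
  have n: "(cmod ((1 + complex_of_real \<theta> * exp (\<i> * complex_of_real \<omega>)) *
                   (1 + complex_of_real (\<beta> * \<theta>) * exp (\<i> * complex_of_real \<omega>))))\<^sup>2
        = Ak \<theta> \<omega> * Ak (\<beta> * \<theta>) \<omega>"
    by (simp only: norm_mult power_mult_distrib Ak_norm)
  have e: "exp (\<i> * complex_of_real \<omega>) = Complex (cos \<omega>) (sin \<omega>)"
    by (simp add: cis_conv_exp[symmetric] cis.ctr)
  show ?thesis unfolding Fi_def n unfolding e Rk_def Sk_def G_def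
    by (simp add: complex_eq_iff)
qed

lemma Rk_cont: "\<bar>\<theta>\<bar> < 1 \<Longrightarrow> \<bar>\<beta>\<bar> \<le> 1 \<Longrightarrow> continuous_on S (Rk \<beta> \<theta>)"
proof -
  assume a: "\<bar>\<theta>\<bar> < 1" "\<bar>\<beta>\<bar> \<le> 1"
  have "\<bar>\<beta> * \<theta>\<bar> < 1" using a by (rule abs_prod_lt)
  then have nz: "\<And>\<omega>. Ak \<theta> \<omega> \<noteq> 0 \<and> Ak (\<beta> * \<theta>) \<omega> \<noteq> 0" using Ak_pos a by (metis less_irrefl)
  have g: "continuous_on S G" using G_cont continuous_on_subset by blast
  show ?thesis unfolding Rk_def[abs_def]
    by (intro continuous_intros g Ak_cont) (simp add: nz)
qed

lemma Sk_cont: "\<bar>\<theta>\<bar> < 1 \<Longrightarrow> \<bar>\<beta>\<bar> \<le> 1 \<Longrightarrow> continuous_on S (Sk \<beta> \<theta>)"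
proof -
  assume a: "\<bar>\<theta>\<bar> < 1" "\<bar>\<beta>\<bar> \<le> 1"
  have "\<bar>\<beta> * \<theta>\<bar> < 1" using a by (rule abs_prod_lt)
  then have nz: "\<And>\<omega>. Ak \<theta> \<omega> \<noteq> 0 \<and> Ak (\<beta> * \<theta>) \<omega> \<noteq> 0" using Ak_pos a by (metis less_irrefl)
  have g: "continuous_on S G" using G_cont continuous_on_subset by blast
  show ?thesis unfolding Sk_def[abs_def]
    by (intro continuous_intros g Ak_cont) (simp add: nz)
qed

lemma Sk_odd: "Sk \<beta> \<theta> (-\<omega>) = - Sk \<beta> \<theta> \<omega>"
  unfolding Sk_def Ak_def by (simp add: G_even)

lemma Sk_int0: "integral {-pi..pi} (Sk \<beta> \<theta>) = 0"
proof -
  have "integral {-pi..pi} (Sk \<beta> \<theta>) = integral {-pi..pi} (\<lambda>x. Sk \<beta> \<theta> (-x))"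
  proof -
    have "integral {- pi..- (- pi)} (\<lambda>x. Sk \<beta> \<theta> (- x)) = integral {- pi..pi} (Sk \<beta> \<theta>)"
      by (rule Henstock_Kurzweil_Integration.integral_reflect_real)
    then show ?thesis by simp
  qed
  also have "\<dots> = - integral {-pi..pi} (Sk \<beta> \<theta>)" by (simp add: Sk_odd)
  finally show ?thesis by simp
qed

lemma f_fun_Rk:
  assumes "\<bar>\<theta>\<bar> < 1" "\<bar>\<beta>\<bar> \<le> 1"
  shows "f_fun \<sigma>2 \<kappa> \<theta> \<beta> = - complex_of_real (integral {-pi..pi} (Rk \<beta> \<theta>))"
proof -
  have ir: "(Rk \<beta> \<theta>) integrable_on {-pi..pi}"
    by (rule integrable_continuous_interval[OF Rk_cont[OF assms]])
  have iS: "(Sk \<beta> \<theta>) integrable_on {-pi..pi}"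
    by (rule integrable_continuous_interval[OF Sk_cont[OF assms]])
  have "(Fi \<theta> \<beta> has_integral (complex_of_real (integral {-pi..pi} (Rk \<beta> \<theta>)) + \<i> * complex_of_real (integral {-pi..pi} (Sk \<beta> \<theta>)))) {-pi..pi}"
    unfolding Fi_split[abs_def]
    by (intro has_integral_add has_integral_mult_right has_integral_of_real integrable_integral ir iS)
  then show ?thesis unfolding f_fun_Fi Sk_int0 by (simp add: integral_unique)
qed

end

lemma one_plus_nz: "cmod z < 1 \<Longrightarrow> cmod w \<le> 1 \<Longrightarrow> 1 + z * w \<noteq> (0::complex)"
proof
  assume a: "cmod z < 1" "cmod w \<le> 1" "1 + z * w = 0"
  then have "z * w = -1" by (simp add: add_eq_0_iff)
  then have "cmod z * cmod w = 1" by (metis norm_minus_cancel norm_mult norm_one)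
  moreover have "cmod z * cmod w < 1"
    using a by (metis mult_le_one mult_less_le_imp_less  norm_ge_zero zero_less_one mult.right_neutral
        le_less_trans mult_left_mono)
  ultimately show False by simp
qed

definition qd :: "real \<Rightarrow> complex \<Rightarrow> real \<Rightarrow> complex" where
  "qd \<beta> z \<omega> = (1 + z * exp (\<i> * complex_of_real \<omega>)) * (1 + z * cnj (exp (\<i> * complex_of_real \<omega>))) *
     (1 + complex_of_real \<beta> * z * exp (\<i> * complex_of_real \<omega>)) * (1 + complex_of_real \<beta> * z * cnj (exp (\<i> * complex_of_real \<omega>)))"

definition dqd :: "real \<Rightarrow> complex \<Rightarrow> real \<Rightarrow> complex" where
  "dqd \<beta> z \<omega> = (let e = exp (\<i> * complex_of_real \<omega>); c = cnj e; b = complex_of_real \<beta> in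
     e * (1 + z * c) * (1 + b * z * e) * (1 + b * z * c) +
     (1 + z * e) * c * (1 + b * z * e) * (1 + b * z * c) +
     (1 + z * e) * (1 + z * c) * (b * e) * (1 + b * z * c) +
     (1 + z * e) * (1 + z * c) * (1 + b * z * e) * (b * c))"

lemma qd_deriv: "((\<lambda>z. qd \<beta> z \<omega>) has_field_derivative dqd \<beta> z \<omega>) (at z)"
  unfolding qd_def dqd_def Let_def
  by (rule derivative_eq_intros refl)+ (simp add: algebra_simps)

lemma qd_nz:
  assumes "cmod z < 1" "\<beta> \<in> {0..1}"
  shows "qd \<beta> z \<omega> \<noteq> 0"
proof -
  have e: "cmod (exp (\<i> * complex_of_real \<omega>)) \<le> 1" "cmod (cnj (exp (\<i> * complex_of_real \<omega>))) \<le> 1"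
    by (simp_all add: norm_exp_i_times)
  have b: "cmod (complex_of_real \<beta> * z) < 1"
    using assms abs_prod_lt[of "cmod z" \<beta>] by (simp add: norm_mult)
  show ?thesis unfolding qd_def
    using one_plus_nz[OF assms(1) e(1)] one_plus_nz[OF assms(1) e(2)]
      one_plus_nz[OF b e(1)] one_plus_nz[OF b e(2)] by (simp add: mult.assoc)
qed

context kset begin

definition Hc where "Hc \<beta> z \<omega> = (exp (\<i> * complex_of_real \<omega>) + complex_of_real \<beta> * z) / qd \<beta> z \<omega> * complex_of_real (G \<omega>)"
definition dHc where "dHc \<beta> z \<omega> = (complex_of_real \<beta> * qd \<beta> z \<omega> - (exp (\<i> * complex_of_real \<omega>) + complex_of_real \<beta> * z) * dqd \<beta> z \<omega>)
   / (qd \<beta> z \<omega> * qd \<beta> z \<omega>) * complex_of_real (G \<omega>)"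
definition H where "H \<beta> z = integral {-pi..pi} (Hc \<beta> z)"

lemma Hc_deriv: "cmod z < 1 \<Longrightarrow> \<beta> \<in> {0..1} \<Longrightarrow> ((\<lambda>z. Hc \<beta> z \<omega>) has_field_derivative dHc \<beta> z \<omega>) (at z within U)"
  unfolding Hc_def[abs_def] dHc_def
  apply (rule has_field_derivative_at_within)
  apply (rule DERIV_cmult_right)
  apply (rule DERIV_divide)
    apply (rule derivative_eq_intros refl)+
    apply simp
   apply (rule qd_deriv)
  apply (erule qd_nz, assumption)
  done

lemma Fi_Hc: "Fi \<theta> \<beta> \<omega> = Hc \<beta> (complex_of_real \<theta>) \<omega>"
proof -
  let ?e = "exp (\<i> * complex_of_real \<omega>)"
  have "complex_of_real ((cmod ((1 + complex_of_real \<theta> * ?e) * (1 + complex_of_real (\<beta> * \<theta>) * ?e)))\<^sup>2)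
     = ((1 + complex_of_real \<theta> * ?e) * (1 + complex_of_real (\<beta> * \<theta>) * ?e)) * cnj ((1 + complex_of_real \<theta> * ?e) * (1 + complex_of_real (\<beta> * \<theta>) * ?e))"
    by (rule complex_norm_square)
  also have "\<dots> = qd \<beta> (complex_of_real \<theta>) \<omega>"
    unfolding qd_def by (simp add: algebra_simps)
  finally show ?thesis unfolding Fi_def Hc_def G_def by simp
qed

lemma Hc_cont_pair:
  assumes "\<beta> \<in> {0..1}"
  shows "continuous_on (ball 0 1 \<times> cbox (-pi) pi) (\<lambda>(x, t). dHc \<beta> x t)"
proof -
  have g: "continuous_on (ball 0 1 \<times> cbox (-pi) pi) (\<lambda>p. G (snd p))"
    by (rule continuous_on_compose2[OF G_cont]) (auto intro!: continuous_intros)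
  have nz: "\<forall>p\<in>ball 0 1 \<times> cbox (-pi) pi. qd \<beta> (fst p) (snd p) * qd \<beta> (fst p) (snd p) \<noteq> 0"
    using qd_nz assms by auto
  have "continuous_on (ball 0 1 \<times> cbox (-pi) pi) (\<lambda>p. dHc \<beta> (fst p) (snd p))"
    unfolding dHc_def dqd_def qd_def Let_def
    apply (intro continuous_intros g)
    using nz unfolding qd_def by auto
  then show ?thesis by (simp add: case_prod_beta')
qed

lemma Hc_integrable: "cmod z < 1 \<Longrightarrow> \<beta> \<in> {0..1} \<Longrightarrow> (Hc \<beta> z) integrable_on {-pi..pi}"
proof -
  assume a: "cmod z < 1" "\<beta> \<in> {0..1}"
  have g: "continuous_on {-pi..pi} G" using G_cont continuous_on_subset by blast
  have nz: "\<forall>\<omega>\<in>{-pi..pi}. qd \<beta> z \<omega> \<noteq> 0" using qd_nz a by auto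
  have "continuous_on {-pi..pi} (Hc \<beta> z)"
    unfolding Hc_def[abs_def] qd_def
    apply (intro continuous_intros g)
    using nz unfolding qd_def by auto
  then show ?thesis by (rule integrable_continuous_interval)
qed

lemma H_holo: "\<beta> \<in> {0..1} \<Longrightarrow> H \<beta> holomorphic_on ball 0 1"
proof -
  assume b: "\<beta> \<in> {0..1}"
  have "(\<lambda>x. integral (cbox (-pi) pi) (Hc \<beta> x)) holomorphic_on ball 0 1"
    apply (rule leibniz_rule_holomorphic[where fx = "dHc \<beta>"])
    using Hc_deriv b apply simp
    using Hc_integrable b apply (simp add: cbox_interval)
     apply (rule Hc_cont_pair[OF b])
    by simp
  then show ?thesis unfolding H_def[abs_def] by (simp add: cbox_interval)
qed

lemma f_H: "f_fun \<sigma>2 \<kappa> \<theta> \<beta> = - H \<beta> (complex_of_real \<theta>)"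
  unfolding f_fun_Fi H_def Fi_Hc ..

lemma f_Cinf: "\<beta> \<in> {0..1} \<Longrightarrow> C_infinity_on {-1<..<1} (\<lambda>\<theta>. f_fun \<sigma>2 \<kappa> \<theta> \<beta>)"
proof -
  assume b: "\<beta> \<in> {0..1}"
  define D where "D n t = - (deriv ^^ n) (H \<beta>) (complex_of_real t)" for n t
  have "\<forall>n. \<forall>x\<in>{-1<..<1}. (D n has_vector_derivative D (Suc n) x) (at x)"
  proof (intro allI ballI)
    fix n and x :: real assume x: "x \<in> {-1<..<1}"
    have xb: "complex_of_real x \<in> ball 0 1" using x by auto
    have "((deriv ^^ n) (H \<beta>) has_field_derivative deriv ((deriv ^^ n) (H \<beta>)) (complex_of_real x)) (at (complex_of_real x))"
      by (rule holomorphic_derivI[OF holomorphic_higher_deriv[OF H_holo[OF b]] _ xb]) simp_all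
    then have "((\<lambda>t. (deriv ^^ n) (H \<beta>) (complex_of_real t)) has_vector_derivative (deriv ^^ Suc n) (H \<beta>) (complex_of_real x)) (at x)"
      by (simp add: has_vector_derivative_real_field)
    then show "(D n has_vector_derivative D (Suc n) x) (at x)"
      unfolding D_def by (rule has_vector_derivative_minus)
  qed
  moreover have "\<forall>x\<in>{-1<..<1}. D 0 x = f_fun \<sigma>2 \<kappa> x \<beta>"
    by (simp add: D_def f_H)
  ultimately show ?thesis unfolding C_infinity_on_def by blast
qed

lemma Rk_int_cont: "\<beta> \<in> {0..1} \<Longrightarrow> continuous_on {-1<..<1} (\<lambda>\<theta>. integral {-pi..pi} (Rk \<beta> \<theta>))"
proof -
  assume b: "\<beta> \<in> {0..1}"
  have "continuous_on (ball 0 1) (H \<beta>)" using H_holo[OF b] holomorphic_on_imp_continuous_on by blast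
  then have c: "continuous_on {-1<..<1} (\<lambda>\<theta>::real. H \<beta> (complex_of_real \<theta>))"
    by (rule continuous_on_compose2) (auto intro!: continuous_intros)
  have "continuous_on {-1<..<1} (\<lambda>\<theta>::real. Re (H \<beta> (complex_of_real \<theta>)))"
    using c by (intro continuous_intros)
  moreover have "\<And>\<theta>. \<theta> \<in> {-1<..<1} \<Longrightarrow> Re (H \<beta> (complex_of_real \<theta>)) = integral {-pi..pi} (Rk \<beta> \<theta>)"
  proof -
    fix \<theta> :: real assume "\<theta> \<in> {-1<..<1}"
    then have "\<bar>\<theta>\<bar> < 1" "\<bar>\<beta>\<bar> \<le> 1" using b by auto
    from f_fun_Rk[OF this] f_H[of \<theta> \<beta>] have "H \<beta> (complex_of_real \<theta>) = complex_of_real (integral {-pi..pi} (Rk \<beta> \<theta>))"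
      by (simp only: neg_equal_iff_equal)
    then show "Re (H \<beta> (complex_of_real \<theta>)) = integral {-pi..pi} (Rk \<beta> \<theta>)"
      by (simp only: Re_complex_of_real)
  qed
  ultimately show ?thesis by (rule continuous_on_cong[THEN iffD1, OF refl, rotated])
qed

end

lemma int_sub_lower:
  fixes h :: "real \<Rightarrow> real"
  assumes "continuous_on {-pi..pi} h" "\<forall>x\<in>{-pi..pi}. 0 \<le> h x" "-pi \<le> a" "a \<le> b" "b \<le> pi"
    "\<forall>x\<in>{a..b}. c \<le> h x"
  shows "c * (b - a) \<le> integral {-pi..pi} h"
proof -
  have sub: "{a..b} \<subseteq> {-pi..pi}" using assms by auto
  have i1: "h integrable_on {-pi..pi}" by (rule integrable_continuous_interval[OF assms(1)])
  have i2: "h integrable_on {a..b}" by (rule integrable_continuous_interval[OF continuous_on_subset[OF assms(1) sub]])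
  have "integral {a..b} (\<lambda>x. c) \<le> integral {a..b} h"
    by (rule integral_le) (use assms i2 in auto)
  also have "\<dots> \<le> integral {-pi..pi} h"
    by (rule integral_subset_le[OF sub i2 i1]) (use assms in auto)
  finally show ?thesis using assms by (simp add: content_real mult.commute)
qed

lemma int_bound:
  fixes F h :: "real \<Rightarrow> real"
  assumes "continuous_on {-pi..pi} F" "continuous_on {-pi..pi} h"
    "\<forall>x\<in>{-pi..pi}. F x \<le> a * h x + b"
  shows "integral {-pi..pi} F \<le> a * integral {-pi..pi} h + b * (2 * pi)"
proof -
  have i1: "F integrable_on {-pi..pi}" by (rule integrable_continuous_interval[OF assms(1)])
  have i2: "h integrable_on {-pi..pi}" by (rule integrable_continuous_interval[OF assms(2)])
  have i3: "(\<lambda>x. a * h x + b) integrable_on {-pi..pi}"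
    by (intro integrable_add integrable_on_mult_right i2 integrable_const_ivl)
  have "integral {-pi..pi} F \<le> integral {-pi..pi} (\<lambda>x. a * h x + b)"
    by (rule integral_le[OF i1 i3]) (use assms in auto)
  also have "\<dots> = integral {-pi..pi} (\<lambda>x. a * h x) + integral {-pi..pi} (\<lambda>x. b)"
    by (rule integral_add) (use i2 in \<open>auto intro: integrable_on_mult_right\<close>)
  also have "\<dots> = a * integral {-pi..pi} h + b * (2 * pi)"
    using integral_mult[OF i2, of a] by (simp add: content_real)
  finally show ?thesis .
qed

lemma Ak_small:
  assumes "1/2 \<le> \<bar>\<theta>\<bar>" "\<bar>\<theta>\<bar> < 1"
  defines "l \<equiv> 1 - \<bar>\<theta>\<bar>"
  obtains a where "-pi \<le> a" "a + l \<le> pi" "\<forall>\<omega>\<in>{a..a+l}. Ak \<theta> \<omega> \<le> 2 * l\<^sup>2"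
proof -
  have l: "0 < l" "l \<le> 1/2" using assms by auto
  have pi3: "3 < pi" by (rule pi_gt3)
  show ?thesis
  proof (cases "\<theta> > 0")
    case True
    then have th: "\<theta> = 1 - l" using l_def by auto
    have "\<forall>\<omega>\<in>{pi - l..pi - l + l}. Ak \<theta> \<omega> \<le> 2 * l\<^sup>2"
    proof
      fix \<omega> assume w: "\<omega> \<in> {pi - l..pi - l + l}"
      have "1 - (pi - \<omega>)\<^sup>2 / 2 \<le> cos (pi - \<omega>)" by (rule cos_lower)
      moreover have "(pi - \<omega>)\<^sup>2 \<le> l\<^sup>2" using w l by (intro power_mono) auto
      ultimately have c: "cos \<omega> \<le> -1 + l\<^sup>2 / 2" by (simp add: cos_pi_minus) 
      have "2 * \<theta> * cos \<omega> \<le> 2 * \<theta> * (-1 + l\<^sup>2 / 2)" using True c by (intro mult_left_mono) auto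
      then have "Ak \<theta> \<omega> \<le> 1 + 2 * \<theta> * (-1 + l\<^sup>2 / 2) + \<theta>\<^sup>2" unfolding Ak_def by linarith
      also have "\<dots> = l\<^sup>2 + \<theta> * l\<^sup>2" unfolding th by (simp add: power2_eq_square algebra_simps)
      also have "\<dots> \<le> 2 * l\<^sup>2" using th l by (simp add: power2_eq_square algebra_simps mult_left_le_one_le)
      finally show "Ak \<theta> \<omega> \<le> 2 * l\<^sup>2" .
    qed
    then show ?thesis using that[of "pi - l"] l pi3 by auto
  next
    case False
    then have th: "\<theta> = -(1 - l)" using l_def by auto
    have "\<forall>\<omega>\<in>{0..0 + l}. Ak \<theta> \<omega> \<le> 2 * l\<^sup>2"
    proof
      fix \<omega> assume w: "\<omega> \<in> {0..0 + l}"
      have "1 - \<omega>\<^sup>2 / 2 \<le> cos \<omega>" by (rule cos_lower)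
      moreover have "\<omega>\<^sup>2 \<le> l\<^sup>2" using w l by (intro power_mono) auto
      ultimately have c: "1 - l\<^sup>2 / 2 \<le> cos \<omega>" by simp
      have "2 * (1 - l) * (1 - l\<^sup>2 / 2) \<le> 2 * (1 - l) * cos \<omega>" using l c by (intro mult_left_mono) auto
      moreover have "Ak \<theta> \<omega> = 1 - 2 * (1 - l) * cos \<omega> + (1 - l)\<^sup>2" unfolding Ak_def th by (simp add: power2_eq_square algebra_simps)
      ultimately have "Ak \<theta> \<omega> \<le> 1 - 2 * (1 - l) * (1 - l\<^sup>2 / 2) + (1 - l)\<^sup>2" by linarith
      also have "\<dots> = l\<^sup>2 + (1 - l) * l\<^sup>2" by (simp add: power2_eq_square algebra_simps)
      also have "\<dots> \<le> 2 * l\<^sup>2" using l by (simp add: power2_eq_square algebra_simps mult_left_le_one_le)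
      finally show "Ak \<theta> \<omega> \<le> 2 * l\<^sup>2" .
    qed
    then show ?thesis using that[of 0] l pi3 by auto
  qed
qed

lemma int_lower:
  assumes "1/2 \<le> \<bar>\<theta>\<bar>" "\<bar>\<theta>\<bar> < 1"
  shows "1 / (2 * (1 - \<bar>\<theta>\<bar>)) \<le> integral {-pi..pi} (\<lambda>\<omega>. 1 / Ak \<theta> \<omega>)"
    and "1 / (4 * (1 - \<bar>\<theta>\<bar>) ^ 3) \<le> integral {-pi..pi} (\<lambda>\<omega>. 1 / (Ak \<theta> \<omega>)\<^sup>2)"
proof -
  define l where "l = 1 - \<bar>\<theta>\<bar>"
  have l: "0 < l" using assms l_def by auto
  obtain a where a: "-pi \<le> a" "a + l \<le> pi" "\<forall>\<omega>\<in>{a..a+l}. Ak \<theta> \<omega> \<le> 2 * l\<^sup>2"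
    using Ak_small[OF assms] l_def by blast
  have pos: "\<And>\<omega>. 0 < Ak \<theta> \<omega>" using Ak_pos assms by auto
  have posnz: "\<And>\<omega>. Ak \<theta> \<omega> \<noteq> 0" using pos by (metis less_irrefl)
  have c1: "continuous_on {-pi..pi} (\<lambda>\<omega>. 1 / Ak \<theta> \<omega>)"
    by (intro continuous_intros Ak_cont) (simp add: posnz)
  have c2: "continuous_on {-pi..pi} (\<lambda>\<omega>. 1 / (Ak \<theta> \<omega>)\<^sup>2)"
    by (intro continuous_intros Ak_cont) (simp add: posnz)
  have "\<forall>\<omega>\<in>{a..a+l}. 1 / (2 * l\<^sup>2) \<le> 1 / Ak \<theta> \<omega>"
    using a(3) pos l by (auto intro!: divide_left_mono)
  from int_sub_lower[OF c1 _ a(1) _ a(2) this] pos l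
  have "1 / (2 * l\<^sup>2) * l \<le> integral {-pi..pi} (\<lambda>\<omega>. 1 / Ak \<theta> \<omega>)"
    by (simp add: less_imp_le)
  then show "1 / (2 * (1 - \<bar>\<theta>\<bar>)) \<le> integral {-pi..pi} (\<lambda>\<omega>. 1 / Ak \<theta> \<omega>)"
    using l unfolding l_def[symmetric] by (simp add: power2_eq_square)
  have "\<forall>\<omega>\<in>{a..a+l}. 1 / (2 * l\<^sup>2)\<^sup>2 \<le> 1 / (Ak \<theta> \<omega>)\<^sup>2"
  proof
    fix \<omega> assume w: "\<omega> \<in> {a..a+l}"
    have "(Ak \<theta> \<omega>)\<^sup>2 \<le> (2 * l\<^sup>2)\<^sup>2" using a(3) w pos[of \<omega>] by (intro power_mono) (auto intro: less_imp_le)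
    moreover have "0 < (Ak \<theta> \<omega>)\<^sup>2" using pos[of \<omega>] by simp
    ultimately show "1 / (2 * l\<^sup>2)\<^sup>2 \<le> 1 / (Ak \<theta> \<omega>)\<^sup>2"
      using l by (intro divide_left_mono) (auto intro!: mult_pos_pos)
  qed
  from int_sub_lower[OF c2 _ a(1) _ a(2) this] pos l
  have "1 / (2 * l\<^sup>2)\<^sup>2 * l \<le> integral {-pi..pi} (\<lambda>\<omega>. 1 / (Ak \<theta> \<omega>)\<^sup>2)"
    by (simp add: less_imp_le)
  then show "1 / (4 * (1 - \<bar>\<theta>\<bar>) ^ 3) \<le> integral {-pi..pi} (\<lambda>\<omega>. 1 / (Ak \<theta> \<omega>)\<^sup>2)"
    using l unfolding l_def[symmetric] by (simp add: power2_eq_square power3_eq_cube)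
qed

lemma pw1:
  fixes A G k m M t :: real
  assumes "0<A" "0<k" "0<m" "m \<le> G" "G \<le> M" "t = (A - k)/2"
  shows "t * G / (A*A) \<le> -(k*m/4) * (1/A^2) + M^2/(4*k*m)"
proof -
  define x where "x = 1/A"
  have x: "0 < x" using assms x_def by simp
  have e: "t * G / (A*A) = G*x/2 - k*G*x^2/2"
    using assms(1) unfolding x_def assms(6) by (simp add: field_simps power2_eq_square)
  have "G*x \<le> M*x" using x assms by (intro mult_right_mono) auto
  moreover have "k*m*x^2 \<le> k*G*x^2" using x assms by (intro mult_right_mono mult_left_mono) auto
  moreover have "0 \<le> (k*m/4) * (x - M/(k*m))^2" using assms by simp
  moreover have "(k*m/4) * (x - M/(k*m))^2 = k*m*x^2/4 - M*x/2 + M^2/(4*k*m)"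
    using assms by (simp add: field_simps power2_eq_square)
  ultimately have "G*x/2 - k*G*x^2/2 \<le> -(k*m/4) * x^2 + M^2/(4*k*m)" by (simp add: field_simps)
  then show ?thesis unfolding e x_def by (simp add: power_one_over)
qed

lemma pw2:
  fixes A1 A2 G P Q q m M b :: real
  assumes "0<A1" "0 < b" "b \<le> A2" "0<m" "m \<le> G" "G \<le> M" "P \<le> -1/4" "0 \<le> Q" "Q \<le> q"
  shows "P * (G / A1) + Q * (G / A2) \<le> -(m/4) * (1/A1) + q * (M / b)"
proof -
  have "m / A1 \<le> G / A1" using assms by (simp add: divide_right_mono)
  then have "P * (G / A1) \<le> P * (m / A1)" using assms by (intro mult_left_mono_neg) auto
  also have "\<dots> \<le> -(1/4) * (m / A1)" using assms by (intro mult_right_mono) auto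
  finally have 1: "P * (G / A1) \<le> -(m/4) * (1/A1)" by simp
  have "G / A2 \<le> M / A2" using assms by (simp add: divide_right_mono)
  also have "\<dots> \<le> M / b" using assms by (intro divide_left_mono) auto
  finally have g: "G / A2 \<le> M / b" .
  have "Q * (G / A2) \<le> q * (M / b)" using assms g
    by (intro mult_mono) auto
  with 1 show ?thesis by linarith
qed

lemma pid:
  fixes \<theta> \<beta> c :: real
  shows "\<theta> * (c + \<beta>*\<theta>) * (2*(\<beta>-1)*(1-\<beta>*\<theta>^2)) =
    (1 + \<theta>^2 - 2*\<beta>*\<theta>^2) * (1 + 2*(\<beta>*\<theta>)*c + (\<beta>*\<theta>)^2) + (\<beta>^2*\<theta>^2 - 1) * (1 + 2*\<theta>*c + \<theta>^2)"
  by (simp add: algebra_simps power2_eq_square)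

context kset begin

lemma Rk_integrable: "\<bar>\<theta>\<bar> < 1 \<Longrightarrow> \<beta> \<in> {0..1} \<Longrightarrow> (Rk \<beta> \<theta>) integrable_on {-pi..pi}"
  by (rule integrable_continuous_interval[OF Rk_cont]) auto

lemma est_lt1:
  assumes b: "0 \<le> \<beta>" "\<beta> < 1" and m: "0 < m" and mM: "\<forall>\<omega>\<in>{-pi..pi}. m \<le> G \<omega> \<and> G \<omega> \<le> M"
  shows "\<exists>\<delta>>0. \<forall>\<theta>. 1/2 \<le> \<bar>\<theta>\<bar> \<longrightarrow> \<bar>\<theta>\<bar> < 1 \<longrightarrow> 1 - \<bar>\<theta>\<bar> < \<delta> \<longrightarrow> \<theta> * integral {-pi..pi} (Rk \<beta> \<theta>) < 0"
proof -
  have Mpos: "0 < M" using mM m by (metis atLeastAtMost_iff order_trans less_le_trans pi_ge_zero neg_le_0_iff_le order_refl)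
  have bb: "0 < 1 - \<beta>" using b by simp
  define \<delta> where "\<delta> = m * (1-\<beta>)^4 / (8 * pi * M)"
  have dpos: "0 < \<delta>" unfolding \<delta>_def using m Mpos bb by simp
  show ?thesis
  proof (intro exI[of _ \<delta>] conjI dpos allI impI)
    fix \<theta> :: real assume t: "1/2 \<le> \<bar>\<theta>\<bar>" "\<bar>\<theta>\<bar> < 1" "1 - \<bar>\<theta>\<bar> < \<delta>"
    define l where "l = 1 - \<bar>\<theta>\<bar>"
    have l: "0 < l" using t l_def by simp
    define D where "D = 2*(\<beta>-1)*(1-\<beta>*\<theta>^2)"
    define P where "P = (1 + \<theta>^2 - 2*\<beta>*\<theta>^2) / D"
    define Q where "Q = (\<beta>^2*\<theta>^2 - 1) / D"
    define q where "q = 1 / (2 * (1-\<beta>)^2)"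
    have th2: "1/4 \<le> \<theta>^2" "\<theta>^2 < 1"
    proof -
      have "(1/2)^2 \<le> \<bar>\<theta>\<bar>^2" using t by (intro power_mono) auto
      then show "1/4 \<le> \<theta>^2" by (simp add: power2_eq_square)
      have "\<bar>\<theta>\<bar>^2 < 1^2" using t by (intro power_strict_mono) auto
      then show "\<theta>^2 < 1" by simp
    qed
    have bt: "\<beta>*\<theta>^2 \<le> \<beta>" using b th2 by (simp add: mult_left_le)
    have Dneg: "D < 0" unfolding D_def
    proof (rule mult_neg_pos)
      show "2 * (\<beta> - 1) < 0" using b by simp
      show "0 < 1 - \<beta> * \<theta>\<^sup>2" using b bt by simp
    qed
    have Dnz: "D \<noteq> 0" using Dneg by simp
    have mD: "-D = 2*(1-\<beta>)*(1-\<beta>*\<theta>^2)" unfolding D_def by (simp add: algebra_simps)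
    have Dge: "-D \<le> 2*(1-\<beta>)"
    proof -
      have "2*(1-\<beta>)*(1-\<beta>*\<theta>^2) \<le> 2*(1-\<beta>)*1" using b by (intro mult_left_mono) auto
      then show ?thesis using mD by simp
    qed
    have Dle: "-D \<ge> 2*(1-\<beta>)*(1-\<beta>)" unfolding mD using b th2 bt by (intro mult_left_mono) auto
    have Pn: "(1-\<beta>)/2 \<le> 1 + \<theta>^2 - 2*\<beta>*\<theta>^2"
    proof -
      have "(1-\<beta>)*(1/4) \<le> (1-\<beta>)*\<theta>^2" using b th2 by (intro mult_left_mono) auto
      then show ?thesis using th2 by (simp add: algebra_simps)
    qed
    have P: "P \<le> -1/4"
    proof -
      have x1: "(1-\<beta>)/2 / (-D) \<ge> (1-\<beta>)/2 / (2*(1-\<beta>))" using Dneg Dge bb by (intro divide_left_mono) (auto intro!: mult_pos_neg)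
      have x2: "(1 + \<theta>^2 - 2*\<beta>*\<theta>^2) / (-D) \<ge> (1-\<beta>)/2 / (-D)" using Pn Dneg by (intro divide_right_mono) auto
      have x3: "(1-\<beta>)/2 / (2*(1-\<beta>)) = 1/4" using bb by simp
      have "(1 + \<theta>^2 - 2*\<beta>*\<theta>^2) / (-D) \<ge> 1/4" using x1 x2 x3 by linarith
      then show ?thesis unfolding P_def using divide_minus_right[of "1 + \<theta>^2 - 2*\<beta>*\<theta>^2" D] by linarith
    qed
    have bth: "\<bar>\<beta>*\<theta>\<bar> \<le> \<beta>" using b t by (simp add: abs_mult mult_left_le)
    have bth1: "\<bar>\<beta>*\<theta>\<bar> < 1" using bth b by simp
    have Q0: "0 \<le> Q"
    proof -
      have "(\<beta>*\<theta>)^2 \<le> 1" using bth1 by (simp add: abs_square_le_1)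
      then have "\<beta>^2*\<theta>^2 \<le> 1" by (simp add: power_mult_distrib)
      then show ?thesis unfolding Q_def using Dneg by (simp add: divide_nonpos_neg)
    qed
    have Qq: "Q \<le> q"
    proof -
      have "Q = (1 - \<beta>^2*\<theta>^2) / (-D)" unfolding Q_def using Dneg by (simp add: field_simps)
      also have "\<dots> \<le> 1 / (-D)" using Dneg b by (intro divide_right_mono) auto
      also have "\<dots> \<le> 1 / (2*(1-\<beta>)*(1-\<beta>))" using Dle bb Dneg by (intro divide_left_mono) (auto intro!: mult_neg_pos)
      also have "1 / (2*(1-\<beta>)*(1-\<beta>)) = q" unfolding q_def by (simp add: power2_eq_square mult.assoc)
      finally show ?thesis .
    qed
    have pw: "\<theta> * Rk \<beta> \<theta> \<omega> \<le> -(m/4) * (1 / Ak \<theta> \<omega>) + q * (M / (1-\<beta>)^2)" if w: "\<omega> \<in> {-pi..pi}" for \<omega>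
    proof -
      have A1: "0 < Ak \<theta> \<omega>" using Ak_pos t by simp
      have A2: "0 < Ak (\<beta>*\<theta>) \<omega>" using Ak_pos bth1 by simp
      have A2b: "(1-\<beta>)^2 \<le> Ak (\<beta>*\<theta>) \<omega>"
      proof -
        have "(1-\<beta>)^2 \<le> (1 - \<bar>\<beta>*\<theta>\<bar>)^2" using bth bb by (intro power_mono) auto
        also have "\<dots> \<le> Ak (\<beta>*\<theta>) \<omega>" using Ak_ge bth1 by simp
        finally show ?thesis .
      qed
      have "\<theta> * Rk \<beta> \<theta> \<omega> = (\<theta> * (cos \<omega> + \<beta>*\<theta>) * D) * G \<omega> / (D * Ak \<theta> \<omega> * Ak (\<beta>*\<theta>) \<omega>)"
        unfolding Rk_def using Dnz A1 A2 by (simp add: field_simps)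
      also have "\<dots> = P * (G \<omega> / Ak \<theta> \<omega>) + Q * (G \<omega> / Ak (\<beta>*\<theta>) \<omega>)"
        unfolding D_def pid[of \<theta> "cos \<omega>" \<beta>] unfolding D_def[symmetric] P_def Q_def Ak_def[symmetric]
        using A1 A2 Dnz by (simp add: field_simps)
      also have "\<dots> \<le> -(m/4) * (1 / Ak \<theta> \<omega>) + q * (M / (1-\<beta>)^2)"
        by (rule pw2) (use A1 A2b bb m mM w P Q0 Qq in auto)
      finally show ?thesis .
    qed
    have cF: "continuous_on {-pi..pi} (\<lambda>\<omega>. \<theta> * Rk \<beta> \<theta> \<omega>)"
      using Rk_cont[of \<theta> \<beta>] t b by (intro continuous_intros) auto
    have posnz: "\<And>\<omega>. Ak \<theta> \<omega> \<noteq> 0" using Ak_pos t by (metis less_irrefl)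
    have ch: "continuous_on {-pi..pi} (\<lambda>\<omega>. 1 / Ak \<theta> \<omega>)"
      by (intro continuous_intros Ak_cont) (simp add: posnz)
    have "\<theta> * integral {-pi..pi} (Rk \<beta> \<theta>) = integral {-pi..pi} (\<lambda>\<omega>. \<theta> * Rk \<beta> \<theta> \<omega>)"
      using integral_mult[OF Rk_integrable[of \<theta> \<beta>]] t b by simp
    also have "\<dots> \<le> -(m/4) * integral {-pi..pi} (\<lambda>\<omega>. 1 / Ak \<theta> \<omega>) + q * (M / (1-\<beta>)^2) * (2*pi)"
      by (rule int_bound[OF cF ch]) (use pw in auto)
    also have "\<dots> \<le> -(m/4) * (1 / (2 * l)) + q * (M / (1-\<beta>)^2) * (2*pi)"
    proof -
      have "(m/4) * (1 / (2 * l)) \<le> (m/4) * integral {-pi..pi} (\<lambda>\<omega>. 1 / Ak \<theta> \<omega>)"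
        using int_lower(1)[OF t(1,2)] m unfolding l_def by (intro mult_left_mono) auto
      then show ?thesis by linarith
    qed
    also have "\<dots> < 0"
    proof -
      have y: "(1-\<beta>)^4 = (1-\<beta>)^2 * (1-\<beta>)^2" by (simp flip: power_add)
      have y0: "(1-\<beta>)^2 \<noteq> 0" using bb by simp
      have "q * (M / (1-\<beta>)^2) * (2*pi) = pi * M / (1-\<beta>)^4" unfolding q_def y using y0
        by (simp only: divide_simps) (simp add: algebra_simps)
      moreover have "l < m * (1-\<beta>)^4 / (8 * pi * M)" using t l_def \<delta>_def by simp
      then have "l * (8 * pi * M) < m * (1-\<beta>)^4" using Mpos by (simp add: pos_less_divide_eq)
      then have "pi * M / (1-\<beta>)^4 < (m/4) * (1 / (2 * l))" using l bb by (simp add: field_simps)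
      ultimately show ?thesis by simp
    qed
    finally show "\<theta> * integral {-pi..pi} (Rk \<beta> \<theta>) < 0" .
  qed
qed

end

context kset begin

lemma est_eq1:
  assumes m: "0 < m" and mM: "\<forall>\<omega>\<in>{-pi..pi}. m \<le> G \<omega> \<and> G \<omega> \<le> M"
  shows "\<exists>\<delta>>0. \<forall>\<theta>. 1/2 \<le> \<bar>\<theta>\<bar> \<longrightarrow> \<bar>\<theta>\<bar> < 1 \<longrightarrow> 1 - \<bar>\<theta>\<bar> < \<delta> \<longrightarrow> \<theta> * integral {-pi..pi} (Rk 1 \<theta>) < 0"
proof -
  have Mpos: "0 < M" using mM m by (metis atLeastAtMost_iff order_trans less_le_trans pi_ge_zero neg_le_0_iff_le order_refl)
  define \<delta> where "\<delta> = m^2 / (8 * pi * M^2)"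
  have dpos: "0 < \<delta>" unfolding \<delta>_def using m Mpos by simp
  show ?thesis
  proof (intro exI[of _ \<delta>] conjI dpos allI impI)
    fix \<theta> :: real assume t: "1/2 \<le> \<bar>\<theta>\<bar>" "\<bar>\<theta>\<bar> < 1" "1 - \<bar>\<theta>\<bar> < \<delta>"
    define l where "l = 1 - \<bar>\<theta>\<bar>"
    have l: "0 < l" "l \<le> 1/2" using t l_def by auto
    define k where "k = 1 - \<theta>^2"
    have th2: "\<theta>^2 = (1 - l)^2" unfolding l_def by simp
    have k: "k = l * (2 - l)" unfolding k_def th2 by (simp add: power2_eq_square algebra_simps)
    have kl: "l \<le> k" "k \<le> 2 * l"
    proof -
      have "l * 1 \<le> l * (2 - l)" using l by (intro mult_left_mono) auto
      then show "l \<le> k" unfolding k by simp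
      have "l * (2 - l) \<le> l * 2" using l by (intro mult_left_mono) auto
      then show "k \<le> 2 * l" unfolding k by simp
    qed
    have kpos: "0 < k" using kl l by simp
    have pw: "\<theta> * Rk 1 \<theta> \<omega> \<le> -(k*m/4) * (1 / (Ak \<theta> \<omega>)^2) + M^2/(4*k*m)" if w: "\<omega> \<in> {-pi..pi}" for \<omega>
    proof -
      have A1: "0 < Ak \<theta> \<omega>" using Ak_pos t by simp
      have "\<theta> * Rk 1 \<theta> \<omega> = (\<theta> * (cos \<omega> + \<theta>)) * G \<omega> / (Ak \<theta> \<omega> * Ak \<theta> \<omega>)"
        unfolding Rk_def by simp
      also have "\<dots> \<le> -(k*m/4) * (1 / (Ak \<theta> \<omega>)^2) + M^2/(4*k*m)"
      proof (rule pw1)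
        show "0 < Ak \<theta> \<omega>" "0 < k" "0 < m" by (fact A1, fact kpos, fact m)
        show "m \<le> G \<omega>" "G \<omega> \<le> M" using mM w by auto
        show "\<theta> * (cos \<omega> + \<theta>) = (Ak \<theta> \<omega> - k) / 2"
          unfolding Ak_def k_def by (simp add: power2_eq_square algebra_simps)
      qed
      finally show ?thesis .
    qed
    have cF: "continuous_on {-pi..pi} (\<lambda>\<omega>. \<theta> * Rk 1 \<theta> \<omega>)"
      using Rk_cont[of \<theta> 1] t by (intro continuous_intros) auto
    have posnz: "\<And>\<omega>. Ak \<theta> \<omega> \<noteq> 0" using Ak_pos t by (metis less_irrefl)
    have ch: "continuous_on {-pi..pi} (\<lambda>\<omega>. 1 / (Ak \<theta> \<omega>)^2)"
      by (intro continuous_intros Ak_cont) (simp add: posnz)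
    have "\<theta> * integral {-pi..pi} (Rk 1 \<theta>) = integral {-pi..pi} (\<lambda>\<omega>. \<theta> * Rk 1 \<theta> \<omega>)"
      using integral_mult[OF Rk_integrable[of \<theta> 1]] t by simp
    also have "\<dots> \<le> -(k*m/4) * integral {-pi..pi} (\<lambda>\<omega>. 1 / (Ak \<theta> \<omega>)^2) + M^2/(4*k*m) * (2*pi)"
      by (rule int_bound[OF cF ch]) (use pw in auto)
    also have "\<dots> \<le> -(k*m/4) * (1 / (4 * l^3)) + M^2/(4*k*m) * (2*pi)"
    proof -
      have "(k*m/4) * (1 / (4 * l^3)) \<le> (k*m/4) * integral {-pi..pi} (\<lambda>\<omega>. 1 / (Ak \<theta> \<omega>)^2)"
        using int_lower(2)[OF t(1,2)] m kpos unfolding l_def by (intro mult_left_mono) auto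
      then show ?thesis by linarith
    qed
    also have "\<dots> \<le> -(m / (16 * l^2)) + pi * M^2 / (2 * l * m)"
    proof -
      have "(l*m/4) * (1 / (4 * l^3)) \<le> (k*m/4) * (1 / (4 * l^3))"
        using kl m l by (intro mult_right_mono) auto
      moreover have "(l*m/4) * (1 / (4 * l^3)) = m / (16 * l^2)"
        using l by (simp add: field_simps power2_eq_square power3_eq_cube)
      moreover have "M^2/(4*k*m) * (2*pi) \<le> M^2/(4*l*m) * (2*pi)"
        using kl m l Mpos by (intro mult_right_mono divide_left_mono) auto
      moreover have "M^2/(4*l*m) * (2*pi) = pi * M^2 / (2 * l * m)"
        by (simp add: field_simps)
      ultimately show ?thesis by linarith
    qed
    also have "\<dots> < 0"
    proof -
      have "l < m^2 / (8 * pi * M^2)" using t l_def \<delta>_def by simp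
      then have "l * (8 * pi * M^2) < m^2" using Mpos by (simp add: pos_less_divide_eq)
      then have "pi * M^2 / (2 * l * m) < m / (16 * l^2)" using l m by (simp add: field_simps power2_eq_square)
      then show ?thesis by simp
    qed
    finally show "\<theta> * integral {-pi..pi} (Rk 1 \<theta>) < 0" .
  qed
qed

lemma est:
  assumes b: "\<beta> \<in> {0..1}"
  shows "\<exists>\<delta>>0. \<forall>\<theta>. 1/2 \<le> \<bar>\<theta>\<bar> \<longrightarrow> \<bar>\<theta>\<bar> < 1 \<longrightarrow> 1 - \<bar>\<theta>\<bar> < \<delta> \<longrightarrow> \<theta> * integral {-pi..pi} (Rk \<beta> \<theta>) < 0"
proof -
  obtain m M where mM: "0 < m" "\<forall>\<omega>\<in>{-pi..pi}. m \<le> G \<omega> \<and> G \<omega> \<le> M" using G_bounds by blast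
  show ?thesis
  proof (cases "\<beta> = 1")
    case True then show ?thesis using est_eq1[OF mM] by simp
  next
    case False then show ?thesis using est_lt1[OF _ _ mM] b by simp
  qed
qed

end

context kset begin

lemma Lbar_eq: "Lbar \<sigma>2 \<kappa> = (\<lambda>\<theta>. integral (cbox (-pi) pi) (\<lambda>\<omega>. G \<omega> / Ak \<theta> \<omega>))"
  unfolding Lbar_def[abs_def] G_def Ak_norm by (simp add: cbox_interval)

lemma Lbar_deriv:
  assumes t: "\<bar>\<theta>\<bar> < 1"
  shows "(Lbar \<sigma>2 \<kappa> has_real_derivative (-2 * integral {-pi..pi} (Rk 1 \<theta>))) (at \<theta>)"
proof -
  let ?U = "{-1<..<1::real}"
  have d: "((\<lambda>x. G t / Ak x t) has_field_derivative -2 * Rk 1 x t) (at x within ?U)"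
    if x: "x \<in> ?U" for x t
  proof -
    have A: "0 < Ak x t" using x Ak_pos by auto
    have dA: "((\<lambda>x. Ak x t) has_field_derivative (2 * cos t + 2 * x)) (at x within ?U)"
      unfolding Ak_def by (auto intro!: derivative_eq_intros)
    have "((\<lambda>x. G t / Ak x t) has_field_derivative (0 * Ak x t - G t * (2 * cos t + 2 * x)) / (Ak x t * Ak x t)) (at x within ?U)"
      by (rule DERIV_divide[OF DERIV_const dA]) (use A in simp)
    then show ?thesis
      by (rule DERIV_cong) (use A in \<open>simp add: Rk_def field_simps\<close>)
  qed
  have i: "(\<lambda>t. G t / Ak x t) integrable_on cbox (-pi) pi" if x: "x \<in> ?U" for x
  proof -
    have "\<bar>x\<bar> < 1" using x by auto
    then have nz: "\<And>\<omega>. Ak x \<omega> \<noteq> 0" using Ak_pos by (metis less_irrefl)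
    have "continuous_on {-pi..pi} (\<lambda>t. G t / Ak x t)"
      using G_cont by (intro continuous_intros Ak_cont) (auto intro: continuous_on_subset simp: nz)
    then show ?thesis unfolding cbox_interval by (rule integrable_continuous_interval)
  qed
  have c: "continuous_on (?U \<times> cbox (-pi) pi) (\<lambda>(x, t). -2 * Rk 1 x t)"
  proof -
    have g: "continuous_on (?U \<times> cbox (-pi) pi) (\<lambda>p. G (snd p))"
      by (rule continuous_on_compose2[OF G_cont]) (auto intro!: continuous_intros)
    have nz: "\<forall>p\<in>?U \<times> cbox (-pi) pi. Ak (fst p) (snd p) * Ak (fst p) (snd p) \<noteq> 0"
    proof
      fix p assume "p \<in> ?U \<times> cbox (-pi) pi"
      then have "\<bar>fst p\<bar> < 1" by auto
      then have "0 < Ak (fst p) (snd p)" by (rule Ak_pos)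
      then show "Ak (fst p) (snd p) * Ak (fst p) (snd p) \<noteq> 0" by simp
    qed
    have ca: "continuous_on (?U \<times> cbox (-pi) pi) (\<lambda>p. Ak (fst p) (snd p))"
      unfolding Ak_def by (intro continuous_intros)
    have r: "(\<lambda>p. -2 * Rk 1 (fst p) (snd p)) = (\<lambda>p. -2 * ((cos (snd p) + fst p) * G (snd p) / (Ak (fst p) (snd p) * Ak (fst p) (snd p))))"
      unfolding Rk_def by simp
    have "continuous_on (?U \<times> cbox (-pi) pi) (\<lambda>p. -2 * Rk 1 (fst p) (snd p))"
      unfolding r
      apply (rule continuous_on_mult_left)
      apply (rule continuous_on_divide)
        apply (rule continuous_on_mult[OF _ g])
        apply (rule continuous_on_add[OF continuous_on_cos[OF continuous_on_snd[OF continuous_on_id]] continuous_on_fst[OF continuous_on_id]])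
       apply (rule continuous_on_mult[OF ca ca])
      by (rule nz)
    then show ?thesis by (simp add: case_prod_beta')
  qed
  have "((\<lambda>x. integral (cbox (-pi) pi) (\<lambda>t. G t / Ak x t)) has_field_derivative integral (cbox (-pi) pi) (\<lambda>t. -2 * Rk 1 \<theta> t)) (at \<theta> within ?U)"
    by (rule leibniz_rule_field_derivative[OF d i c]) (use t in auto)
  then have "(Lbar \<sigma>2 \<kappa> has_field_derivative integral {-pi..pi} (\<lambda>t. -2 * Rk 1 \<theta> t)) (at \<theta>)"
  proof -
    have "at \<theta> within ?U = at \<theta>" by (rule at_within_open) (use t in auto)
    moreover note \<open>((\<lambda>x. integral (cbox (-pi) pi) (\<lambda>t. G t / Ak x t)) has_field_derivative integral (cbox (-pi) pi) (\<lambda>t. -2 * Rk 1 \<theta> t)) (at \<theta> within ?U)\<close>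
    ultimately show ?thesis unfolding Lbar_eq cbox_interval by simp
  qed
  moreover have "integral {-pi..pi} (\<lambda>t. -2 * Rk 1 \<theta> t) = -2 * integral {-pi..pi} (Rk 1 \<theta>)"
    using integral_mult[OF Rk_integrable[of \<theta> 1]] t by simp
  ultimately show ?thesis by simp
qed

lemma Lbar_lower:
  assumes t: "1/2 \<le> \<bar>\<theta>\<bar>" "\<bar>\<theta>\<bar> < 1" and m: "0 < m" "\<forall>\<omega>\<in>{-pi..pi}. m \<le> G \<omega>"
  shows "m / (2 * (1 - \<bar>\<theta>\<bar>)) \<le> Lbar \<sigma>2 \<kappa> \<theta>"
proof -
  have pos: "\<And>\<omega>. 0 < Ak \<theta> \<omega>" using Ak_pos t by simp
  have nz: "\<And>\<omega>. Ak \<theta> \<omega> \<noteq> 0" using pos by (metis less_irrefl)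
  have c1: "continuous_on {-pi..pi} (\<lambda>\<omega>. 1 / Ak \<theta> \<omega>)"
    by (intro continuous_intros Ak_cont) (simp add: nz)
  have c2: "continuous_on {-pi..pi} (\<lambda>\<omega>. G \<omega> / Ak \<theta> \<omega>)"
    using G_cont by (intro continuous_intros Ak_cont) (auto intro: continuous_on_subset simp: nz)
  have i1: "(\<lambda>\<omega>. 1 / Ak \<theta> \<omega>) integrable_on {-pi..pi}" by (rule integrable_continuous_interval[OF c1])
  have i2: "(\<lambda>\<omega>. G \<omega> / Ak \<theta> \<omega>) integrable_on {-pi..pi}" by (rule integrable_continuous_interval[OF c2])
  have "m * (1 / (2 * (1 - \<bar>\<theta>\<bar>))) \<le> m * integral {-pi..pi} (\<lambda>\<omega>. 1 / Ak \<theta> \<omega>)"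
    using int_lower(1)[OF t] m by (intro mult_left_mono) auto
  also have "\<dots> = integral {-pi..pi} (\<lambda>\<omega>. m * (1 / Ak \<theta> \<omega>))"
    by (rule integral_mult[OF i1])
  also have "\<dots> \<le> integral {-pi..pi} (\<lambda>\<omega>. G \<omega> / Ak \<theta> \<omega>)"
  proof (rule integral_le)
    show "(\<lambda>\<omega>. m * (1 / Ak \<theta> \<omega>)) integrable_on {-pi..pi}" using i1 by (rule integrable_on_mult_right)
    show "(\<lambda>\<omega>. G \<omega> / Ak \<theta> \<omega>) integrable_on {-pi..pi}" by (fact i2)
    fix \<omega> assume "\<omega> \<in> {-pi..pi}"
    then have "m \<le> G \<omega>" using m by auto
    then show "m * (1 / Ak \<theta> \<omega>) \<le> G \<omega> / Ak \<theta> \<omega>" using pos[of \<omega>] by (simp add: divide_right_mono)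
  qed
  also have "\<dots> = Lbar \<sigma>2 \<kappa> \<theta>" unfolding Lbar_eq cbox_interval ..
  finally show ?thesis by simp
qed

end

context kset begin

lemma zeros_part:
  assumes b: "\<beta> \<in> {0..1}"
  shows "{\<theta>\<in>{-1<..<1}. f_fun \<sigma>2 \<kappa> \<theta> \<beta> = 0} \<noteq> {} \<and> compact {\<theta>\<in>{-1<..<1}. f_fun \<sigma>2 \<kappa> \<theta> \<beta> = 0}"
proof -
  define R where "R \<theta> = integral {-pi..pi} (Rk \<beta> \<theta>)" for \<theta>
  have fR: "f_fun \<sigma>2 \<kappa> \<theta> \<beta> = 0 \<longleftrightarrow> R \<theta> = 0" if "\<theta> \<in> {-1<..<1}" for \<theta>
  proof -
    have "\<bar>\<theta>\<bar> < 1" "\<bar>\<beta>\<bar> \<le> 1" using that b by auto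
    from f_fun_Rk[OF this] show ?thesis unfolding R_def by simp
  qed
  obtain \<delta> where d: "\<delta> > 0" "\<forall>\<theta>. 1/2 \<le> \<bar>\<theta>\<bar> \<longrightarrow> \<bar>\<theta>\<bar> < 1 \<longrightarrow> 1 - \<bar>\<theta>\<bar> < \<delta> \<longrightarrow> \<theta> * R \<theta> < 0"
    using est[OF b] unfolding R_def by blast
  define a where "a = 1 - min \<delta> 1 / 2"
  have a: "1/2 \<le> a" "a < 1" "1 - a < \<delta>" using d(1) unfolding a_def by (auto simp: min_def)
  have Ra: "R a < 0"
  proof -
    have "a * R a < 0" using d(2) a by auto
    then show ?thesis using a by (simp add: mult_less_0_iff)
  qed
  have Rma: "0 < R (-a)"
  proof -
    have "(-a) * R (-a) < 0" using d(2)[rule_format, of "-a"] a by auto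
    then have "0 < a * R (-a)" by simp
    moreover have "0 < a" using a by simp
    ultimately show ?thesis using zero_less_mult_pos by blast
  qed
  have cont: "continuous_on {-a..a} R"
    using Rk_int_cont[OF b] unfolding R_def by (rule continuous_on_subset) (use a in auto)
  obtain x where x: "-a \<le> x" "x \<le> a" "R x = 0"
    using IVT2'[of R a 0 "-a", OF _ _ _ cont] Ra Rma a by auto
  have ne: "{\<theta>\<in>{-1<..<1}. f_fun \<sigma>2 \<kappa> \<theta> \<beta> = 0} \<noteq> {}"
  proof -
    have "x \<in> {-1<..<1}" using x a by auto
    then show ?thesis using fR x by blast
  qed
  have eq: "{\<theta>\<in>{-1<..<1}. f_fun \<sigma>2 \<kappa> \<theta> \<beta> = 0} = {-a..a} \<inter> R -` {0}"
  proof (intro equalityI subsetI)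
    fix \<theta> assume "\<theta> \<in> {\<theta>\<in>{-1<..<1}. f_fun \<sigma>2 \<kappa> \<theta> \<beta> = 0}"
    then have t: "\<theta> \<in> {-1<..<1}" "R \<theta> = 0" using fR by auto
    have "\<bar>\<theta>\<bar> \<le> a"
    proof (rule ccontr)
      assume "\<not> \<bar>\<theta>\<bar> \<le> a"
      then have "\<theta> * R \<theta> < 0" using d(2) a t(1) by auto
      then show False using t by simp
    qed
    then show "\<theta> \<in> {-a..a} \<inter> R -` {0}" using t by auto
  next
    fix \<theta> assume "\<theta> \<in> {-a..a} \<inter> R -` {0}"
    then have "\<theta> \<in> {-1<..<1}" "R \<theta> = 0" using a by auto
    then show "\<theta> \<in> {\<theta>\<in>{-1<..<1}. f_fun \<sigma>2 \<kappa> \<theta> \<beta> = 0}" using fR by auto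
  qed
  have cl: "closed ({-a..a} \<inter> R -` {0})"
    by (rule continuous_closed_preimage[OF cont closed_atLeastAtMost closed_singleton])
  have bd: "bounded ({-a..a} \<inter> R -` {0})"
    by (rule bounded_subset[OF compact_imp_bounded[OF compact_Icc]]) auto
  show ?thesis
  proof
    show "{\<theta>\<in>{-1<..<1}. f_fun \<sigma>2 \<kappa> \<theta> \<beta> = 0} \<noteq> {}" by (fact ne)
    show "compact {\<theta>\<in>{-1<..<1}. f_fun \<sigma>2 \<kappa> \<theta> \<beta> = 0}"
      unfolding eq compact_eq_bounded_closed using cl bd by simp
  qed
qed

lemma min_part: "{\<theta>\<in>{-1<..<1}. \<forall>\<theta>'\<in>{-1<..<1}. Lbar \<sigma>2 \<kappa> \<theta> \<le> Lbar \<sigma>2 \<kappa> \<theta>'} \<noteq> {}"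
proof -
  obtain m M where mM: "0 < m" "\<forall>\<omega>\<in>{-pi..pi}. m \<le> G \<omega> \<and> G \<omega> \<le> M" using G_bounds by blast
  let ?L = "Lbar \<sigma>2 \<kappa>"
  define L0 where "L0 = ?L 0"
  define a where "a = 1 - min (1/2) (m / (4 * (\<bar>L0\<bar> + 1)))"
  have mpos: "0 < m / (4 * (\<bar>L0\<bar> + 1))" using mM by simp
  have a: "1/2 \<le> a" "a < 1" using mpos unfolding a_def by (auto simp: min_def)
  have big: "L0 < ?L y" if y: "y \<in> {-1<..<1}" "a < \<bar>y\<bar>" for y
  proof -
    have y1: "1/2 \<le> \<bar>y\<bar>" "\<bar>y\<bar> < 1" using y a by auto
    have l: "0 < 1 - \<bar>y\<bar>" using y1 by simp
    have "1 - \<bar>y\<bar> < 1 - a" using y by simp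
    moreover have "1 - a \<le> m / (4 * (\<bar>L0\<bar> + 1))" unfolding a_def by simp
    ultimately have "1 - \<bar>y\<bar> < m / (4 * (\<bar>L0\<bar> + 1))" by linarith
    then have "(1 - \<bar>y\<bar>) * (4 * (\<bar>L0\<bar> + 1)) < m" by (simp add: pos_less_divide_eq)
    then have "2 * (\<bar>L0\<bar> + 1) < m / (2 * (1 - \<bar>y\<bar>))" using l by (simp add: field_simps)
    moreover have "m / (2 * (1 - \<bar>y\<bar>)) \<le> ?L y" using Lbar_lower[OF y1 mM(1)] mM(2) by auto
    moreover have "L0 < 2 * (\<bar>L0\<bar> + 1)" by (simp add: abs_if)
    ultimately show ?thesis by (meson less_trans less_le_trans)
  qed
  have cont: "continuous_on {-a..a} ?L"
  proof (rule continuous_at_imp_continuous_on, rule ballI)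
    fix x assume "x \<in> {-a..a}"
    then have "\<bar>x\<bar> < 1" using a by auto
    from Lbar_deriv[OF this] show "isCont ?L x" by (rule DERIV_isCont)
  qed
  obtain x where x: "x \<in> {-a..a}" "\<forall>y\<in>{-a..a}. ?L x \<le> ?L y"
    using continuous_attains_inf[OF compact_Icc _ cont] a by auto
  have "x \<in> {\<theta>\<in>{-1<..<1}. \<forall>\<theta>'\<in>{-1<..<1}. ?L \<theta> \<le> ?L \<theta>'}"
  proof (intro CollectI conjI ballI)
    show "x \<in> {-1<..<1}" using x a by auto
    fix y :: real assume y: "y \<in> {-1<..<1}"
    show "?L x \<le> ?L y"
    proof (cases "\<bar>y\<bar> \<le> a")
      case True
      then have "y \<in> {-a..a}" by (auto simp: abs_le_iff)
      then show ?thesis using x by auto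
    next
      case False
      then have "L0 < ?L y" using big y by auto
      moreover have "?L x \<le> L0" unfolding L0_def using x a by auto
      ultimately show ?thesis by simp
    qed
  qed
  then show ?thesis by blast
qed

lemma min_sub: "{\<theta>\<in>{-1<..<1}. \<forall>\<theta>'\<in>{-1<..<1}. Lbar \<sigma>2 \<kappa> \<theta> \<le> Lbar \<sigma>2 \<kappa> \<theta>'} \<subseteq> {\<theta>\<in>{-1<..<1}. f_fun \<sigma>2 \<kappa> \<theta> 1 = 0}"
proof
  fix \<theta> assume "\<theta> \<in> {\<theta>\<in>{-1<..<1}. \<forall>\<theta>'\<in>{-1<..<1}. Lbar \<sigma>2 \<kappa> \<theta> \<le> Lbar \<sigma>2 \<kappa> \<theta>'}"
  then have t: "\<theta> \<in> {-1<..<1}" "\<forall>\<theta>'\<in>{-1<..<1}. Lbar \<sigma>2 \<kappa> \<theta> \<le> Lbar \<sigma>2 \<kappa> \<theta>'" by auto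
  have t1: "\<bar>\<theta>\<bar> < 1" using t by auto
  have "-2 * integral {-pi..pi} (Rk 1 \<theta>) = 0"
  proof (rule DERIV_local_min[OF Lbar_deriv[OF t1]])
    show "0 < 1 - \<bar>\<theta>\<bar>" using t1 by simp
    show "\<forall>y. \<bar>\<theta> - y\<bar> < 1 - \<bar>\<theta>\<bar> \<longrightarrow> Lbar \<sigma>2 \<kappa> \<theta> \<le> Lbar \<sigma>2 \<kappa> y"
    proof (intro allI impI)
      fix y assume "\<bar>\<theta> - y\<bar> < 1 - \<bar>\<theta>\<bar>"
      then have "y \<in> {-1<..<1}" by auto
      then show "Lbar \<sigma>2 \<kappa> \<theta> \<le> Lbar \<sigma>2 \<kappa> y" using t by auto
    qed
  qed
  then have "integral {-pi..pi} (Rk 1 \<theta>) = 0" by simp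
  then have "f_fun \<sigma>2 \<kappa> \<theta> 1 = 0" using f_fun_Rk[OF t1, of 1] by simp
  then show "\<theta> \<in> {\<theta>\<in>{-1<..<1}. f_fun \<sigma>2 \<kappa> \<theta> 1 = 0}" using t by auto
qed

end

theorem proposition4p4:
  fixes \<sigma>2 :: real and \<kappa> :: "nat \<Rightarrow> real"
  assumes "\<sigma>2 > 0"
    and "\<kappa> 0 = 1"
    and "summable (\<lambda>s. \<bar>\<kappa> s\<bar>)"
    and "\<And>z. cmod z \<le> 1 \<Longrightarrow> kappa_fun \<kappa> z \<noteq> 0"
  shows "(\<forall>\<beta>\<in>{0..1}.
           C_infinity_on {-1<..<1} (\<lambda>\<theta>. f_fun \<sigma>2 \<kappa> \<theta> \<beta>) \<and>
           {\<theta>\<in>{-1<..<1}. f_fun \<sigma>2 \<kappa> \<theta> \<beta> = 0} \<noteq> {} \<and>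
           compact {\<theta>\<in>{-1<..<1}. f_fun \<sigma>2 \<kappa> \<theta> \<beta> = 0})
         \<and> {\<theta>\<in>{-1<..<1}. \<forall>\<theta>'\<in>{-1<..<1}. Lbar \<sigma>2 \<kappa> \<theta> \<le> Lbar \<sigma>2 \<kappa> \<theta>'} \<noteq> {} \<and>
         {\<theta>\<in>{-1<..<1}. \<forall>\<theta>'\<in>{-1<..<1}. Lbar \<sigma>2 \<kappa> \<theta> \<le> Lbar \<sigma>2 \<kappa> \<theta>'}
           \<subseteq> {\<theta>\<in>{-1<..<1}. f_fun \<sigma>2 \<kappa> \<theta> 1 = 0}"
proof -
  interpret kset \<sigma>2 \<kappa> by (unfold_locales) (use assms in auto)
  show ?thesis using f_Cinf zeros_part min_part min_sub by blast
qed

end
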